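(* Let $s\geq 1$ and $t\geq 3$ be integers. Let $G$ be a bipartite graph with bipartition $A\cup B$, $|B|=n$, which contains no copy of $L'_{s,t}$ as a subgraph, and suppose that $W(A)\geq 8(s+t)^2 n$. Then the number of light edges in $W_G$ (i.e. the number of unordered pairs of distinct vertices of $A$ forming a light edge) is at least $\frac{W(A)}{4(s+t)^3}$.
   Context: For a bipartite graph $G$ with bipartition $A\cup B$, write $d_G(u,v)=|N_G(u)\cap N_G(v)|$ for $u,v\in A$, where $N_G(x)$ is the neighbourhood of $x$ in $G$. The neighbourhood graph $W_G$ is the weighted graph on $A$ where the pair $uv$ has weight $d_G(u,v)$. For $U\subseteq A$, $W(U)=\sum_{\{u,v\}\in\binom{U}{2}} d_G(u,v)$. A pair $uv$ of distinct vertices of $A$ is a light edge if $1\leq d_G(u,v)<\binom{s+t-1}{2}$ and a heavy edge if $d_G(u,v)\geq\binom{s+t-1}{2}$. The subdivision of a graph $L$ is the bipartite graph with parts $V(L)$ and $E(L)$ in which $v\in V(L)$ is adjacent to $e\in E(L)$ iff $v$ is an endpoint of $e$. $L_{s,t}$ is the graph on vertex set $S\cup T$, $S\cap T=\emptyset$, $|S|=s$, $|T|=t-1$, where distinct $x,y$ are adjacent iff $x\in T$ or $y\in T$; $L'_{s,t}$ is its subdivision. *)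

theory Defs
  imports Complex_Main
begin

text \<open>A bipartite graph G with bipartition A \<union> B is given by finite sets
  A :: 'a set, B :: 'b set and an edge set E \<subseteq> A \<times> B.\<close>

definition bip_adj :: "('a \<times> 'b) set \<Rightarrow> 'a + 'b \<Rightarrow> 'a + 'b \<Rightarrow> bool" where
  "bip_adj E x y \<longleftrightarrow>
     (\<exists>a b. x = Inl a \<and> y = Inr b \<and> (a, b) \<in> E) \<or>
     (\<exists>a b. x = Inr b \<and> y = Inl a \<and> (a, b) \<in> E)"

text \<open>Common neighbourhood size of a set p of vertices of A (used for 2-sets {u,v}):
  d_G(u,v) = |N(u) \<inter> N(v)|.\<close>
definition codeg :: "'b set \<Rightarrow> ('a \<times> 'b) set \<Rightarrow> 'a set \<Rightarrow> nat" where
  "codeg B E p = card {b \<in> B. \<forall>u \<in> p. (u, b) \<in> E}"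

definition pairs2 :: "'a set \<Rightarrow> 'a set set" where
  "pairs2 U = {p. p \<subseteq> U \<and> card p = 2}"

definition Wsum :: "'b set \<Rightarrow> ('a \<times> 'b) set \<Rightarrow> 'a set \<Rightarrow> nat" where
  "Wsum B E U = (\<Sum>p \<in> pairs2 U. codeg B E p)"

definition light_edges :: "nat \<Rightarrow> nat \<Rightarrow> 'a set \<Rightarrow> 'b set \<Rightarrow> ('a \<times> 'b) set \<Rightarrow> 'a set set" where
  "light_edges s t A B E =
     {p \<in> pairs2 A. 1 \<le> codeg B E p \<and> codeg B E p < (s + t - 1) choose 2}"

text \<open>The graph L_{s,t}: vertex set S \<union> T with S = Inl ` {..<s}, T = Inr ` {..<t-1};
  distinct x, y adjacent iff x \<in> T or y \<in> T. Edges are represented as 2-sets.\<close>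
definition L_verts :: "nat \<Rightarrow> nat \<Rightarrow> (nat + nat) set" where
  "L_verts s t = Inl ` {..<s} \<union> Inr ` {..<t - 1}"

definition L_edges :: "nat \<Rightarrow> nat \<Rightarrow> (nat + nat) set set" where
  "L_edges s t = {{x, y} | x y. x \<in> L_verts s t \<and> y \<in> L_verts s t \<and> x \<noteq> y \<and>
                              (x \<in> Inr ` {..<t - 1} \<or> y \<in> Inr ` {..<t - 1})}"

text \<open>The subdivision L'_{s,t}: bipartite graph with parts V(L) and E(L),
  vertex v adjacent to edge e iff v \<in> e.\<close>
definition contains_Lsub :: "nat \<Rightarrow> nat \<Rightarrow> 'a set \<Rightarrow> 'b set \<Rightarrow> ('a \<times> 'b) set \<Rightarrow> bool" where
  "contains_Lsub s t A B E \<longleftrightarrow>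
     (\<exists>f :: (nat + nat) + (nat + nat) set \<Rightarrow> 'a + 'b.
        inj_on f (L_verts s t <+> L_edges s t) \<and>
        f ` (L_verts s t <+> L_edges s t) \<subseteq> A <+> B \<and>
        (\<forall>v \<in> L_verts s t. \<forall>e \<in> L_edges s t. v \<in> e \<longrightarrow> bip_adj E (f (Inl v)) (f (Inr e))))"

end

theory Submission
  imports Defs
begin


lemma pairs2_finite: "finite V \<Longrightarrow> finite (pairs2 V)"
  by (rule finite_subset[of _ "Pow V"]) (auto simp: pairs2_def)

lemma sdr:
  assumes "finite I" "\<forall>i\<in>I. card I \<le> card (S i)"
  shows "\<exists>g. inj_on g I \<and> (\<forall>i\<in>I. g i \<in> S i)"
  using assms
proof (induction I rule: finite_induct)
  case empty show ?case by auto
next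
  case (insert i F)
  from insert.prems insert.hyps have "\<forall>j\<in>F. card F \<le> card (S j)" by auto
  then obtain g where g: "inj_on g F" "\<forall>j\<in>F. g j \<in> S j" using insert.IH by auto
  have "\<not> S i \<subseteq> g ` F"
  proof
    assume "S i \<subseteq> g ` F"
    then have "card (S i) \<le> card (g ` F)" by (simp add: card_mono insert.hyps(1))
    also have "\<dots> \<le> card F" by (rule card_image_le[OF insert.hyps(1)])
    finally show False using insert.prems insert.hyps by auto
  qed
  then obtain x where x: "x \<in> S i" "x \<notin> g ` F" by auto
  have "inj_on (g(i := x)) (insert i F)"
    using g(1) x(2) insert.hyps(2) unfolding inj_on_def by (auto split: if_splits)
  moreover have "\<forall>j\<in>insert i F. (g(i := x)) j \<in> S j" using g(2) x(1) insert.hyps(2) by auto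
  ultimately show ?case by blast
qed

lemma turan_aux:
  fixes V :: "'a set" and Q :: "'a set \<Rightarrow> bool"
  assumes "finite V" "\<forall>I\<subseteq>V. (\<forall>p\<in>pairs2 I. \<not> Q p) \<longrightarrow> card I \<le> k"
  shows "card V ^ 2 \<le> 2*k*card {p\<in>pairs2 V. Q p} + k*card V"
  using assms
proof (induction "card V" arbitrary: V rule: less_induct)
  case less
  show ?case
  proof (cases "V = {}")
    case True then show ?thesis by simp
  next
    case False
    define Ind where "Ind = {I. I \<subseteq> V \<and> (\<forall>p\<in>pairs2 I. \<not> Q p)}"
    have finInd: "finite Ind" unfolding Ind_def using less.prems(1) by auto
    have "{} \<in> Ind" unfolding Ind_def pairs2_def by auto
    then obtain I where I: "I \<in> Ind" "\<forall>J\<in>Ind. I \<subseteq> J \<longrightarrow> I = J"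
      using finite_has_maximal[OF finInd] by blast
    have nb: "\<forall>v\<in>V-I. \<exists>u\<in>I. Q {u,v}"
    proof
      fix v assume v: "v \<in> V - I"
      show "\<exists>u\<in>I. Q {u,v}"
      proof (rule ccontr)
        assume nq: "\<not> (\<exists>u\<in>I. Q {u,v})"
        have "insert v I \<in> Ind" unfolding Ind_def
        proof (intro CollectI conjI ballI)
          show "insert v I \<subseteq> V" using I(1) v unfolding Ind_def by auto
          fix p assume p: "p \<in> pairs2 (insert v I)"
          then obtain x y where xy: "x \<noteq> y" "p = {x,y}" unfolding pairs2_def by (auto simp: card_2_iff)
          show "\<not> Q p"
          proof (cases "v \<in> p")
            case False
            then have "p \<in> pairs2 I" using p unfolding pairs2_def by auto
            then show ?thesis using I(1) unfolding Ind_def by auto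
          next
            case True
            then have "(x = v \<and> y \<in> I) \<or> (y = v \<and> x \<in> I)" using p xy unfolding pairs2_def by auto
            then show ?thesis using nq xy by (auto simp: insert_commute)
          qed
        qed
        then have "insert v I = I" using I(2) by blast
        with v show False by auto
      qed
    qed
    have IV: "I \<subseteq> V" using I(1) unfolding Ind_def by auto
    have "I \<noteq> {}" using nb False IV by auto
    define V' where "V' = V - I"
    have fV': "finite V'" using less.prems(1) V'_def by auto
    have "card V' < card V" unfolding V'_def using \<open>I \<noteq> {}\<close> IV less.prems(1)
      by (intro psubset_card_mono) auto
    then have IH: "card V' ^ 2 \<le> 2*k*card {p\<in>pairs2 V'. Q p} + k*card V'"
    proof -
      have "\<forall>J\<subseteq>V'. (\<forall>p\<in>pairs2 J. \<not> Q p) \<longrightarrow> card J \<le> k" using less.prems(2) V'_def by auto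
      then show ?thesis using less.hyps[of V'] fV' \<open>card V' < card V\<close> by blast
    qed
    have ik: "card I \<le> k" using I(1) less.prems(2) unfolding Ind_def by auto
    define nbf where "nbf v = (SOME u. u \<in> I \<and> Q {u,v})" for v
    have nbf: "\<forall>v\<in>V'. nbf v \<in> I \<and> Q {nbf v, v}"
      unfolding V'_def nbf_def using nb by (metis (mono_tags, lifting) someI_ex)
    define F where "F = (\<lambda>v. {nbf v, v}) ` V'"
    have inj: "inj_on (\<lambda>v. {nbf v, v}) V'"
      unfolding inj_on_def using nbf V'_def by (metis DiffD2 doubleton_eq_iff)
    have cF: "card F = card V'" unfolding F_def using card_image[OF inj] .
    have disj: "F \<inter> {p\<in>pairs2 V'. Q p} = {}"
      unfolding F_def pairs2_def using nbf V'_def by auto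
    have sub: "F \<union> {p\<in>pairs2 V'. Q p} \<subseteq> {p\<in>pairs2 V. Q p}"
    proof -
      have "F \<subseteq> {p\<in>pairs2 V. Q p}"
        unfolding F_def pairs2_def using nbf V'_def IV by (force simp: card_2_iff)
      moreover have "{p\<in>pairs2 V'. Q p} \<subseteq> {p\<in>pairs2 V. Q p}"
        unfolding pairs2_def V'_def by auto
      ultimately show ?thesis by auto
    qed
    have finF: "finite F" unfolding F_def using fV' by auto
    have fP: "finite {p\<in>pairs2 V. Q p}" using pairs2_finite[OF less.prems(1)] by auto
    have "card F + card {p\<in>pairs2 V'. Q p} \<le> card {p\<in>pairs2 V. Q p}"
      using card_mono[OF fP sub] card_Un_disjoint[OF finF _ disj] pairs2_finite[OF fV'] by auto
    then have L: "card V' + card {p\<in>pairs2 V'. Q p} \<le> card {p\<in>pairs2 V. Q p}" using cF by simp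
    have cV: "card V = card V' + card I" unfolding V'_def using IV less.prems(1)
      by (metis card_Diff_subset card_mono finite_subset le_add_diff_inverse2)
    show ?thesis
    proof -
      define d' where "d' = card V'"
      define i where "i = card I"
      define L' where "L' = card {p\<in>pairs2 V'. Q p}"
      define L where "L = card {p\<in>pairs2 V. Q p}"
      have a: "d'^2 \<le> 2*k*L' + k*d'" using IH unfolding d'_def L'_def .
      have b: "d' + L' \<le> L" using L unfolding d'_def L'_def L_def .
      have c: "i \<le> k" using ik unfolding i_def .
      have "(d'+i)^2 \<le> 2*k*L + k*(d'+i)"
      proof -
        have "(d'+i)^2 = d'^2 + 2*d'*i + i*i" by (simp add: power2_eq_square algebra_simps)
        also have "\<dots> \<le> 2*k*L' + k*d' + 2*d'*k + k*i" using a c by (intro add_mono mult_le_mono) auto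
        also have "\<dots> \<le> 2*k*L + k*(d'+i)" using b by (simp add: algebra_simps) (metis add_mult_distrib2 mult_le_mono2 le_refl add_le_mono mult.commute) 
        finally show ?thesis .
      qed
      then show ?thesis using cV unfolding d'_def i_def L_def by simp
    qed
  qed
qed



lemma card_pairs2: "finite V \<Longrightarrow> card (pairs2 V) = card V choose 2"
  unfolding pairs2_def by (rule n_subsets)

lemma clique_L:
  assumes "finite B" "s \<ge> 1" "t \<ge> 1" "X \<subseteq> A" "card X = s + t - 1"
    "\<forall>p\<in>pairs2 X. codeg B E p \<ge> (s+t-1) choose 2"
  shows "contains_Lsub s t A B E"
proof -
  have fX: "finite X" using assms(2,3,5) by (intro card_ge_0_finite) simp
  have disj: "Inl ` {..<s} \<inter> Inr ` {..<t - 1} = ({} :: (nat+nat) set)" by auto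
  have cLV: "card (L_verts s t) = s + t - 1"
  proof -
    have "card (L_verts s t) = card (Inl ` {..<s} :: (nat+nat) set) + card (Inr ` {..<t - 1} :: (nat+nat) set)"
      unfolding L_verts_def by (rule card_Un_disjoint) auto
    also have "\<dots> = s + (t - 1)" by (simp add: card_image)
    finally show ?thesis using assms(3) by simp
  qed
  have fLV: "finite (L_verts s t)" unfolding L_verts_def by auto
  obtain \<phi> where phi: "bij_betw \<phi> (L_verts s t) X"
    using finite_same_card_bij[OF fLV fX] cLV assms(5) by auto
  have injphi: "inj_on \<phi> (L_verts s t)" using phi bij_betw_imp_inj_on by auto
  have phiX: "\<phi> ` L_verts s t = X" using phi bij_betw_imp_surj_on by auto
  have LEsub: "L_edges s t \<subseteq> pairs2 (L_verts s t)"
    unfolding L_edges_def pairs2_def by auto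
  have fLE: "finite (L_edges s t)" using finite_subset[OF LEsub pairs2_finite[OF fLV]] .
  have cLE: "card (L_edges s t) \<le> (s+t-1) choose 2"
    using card_mono[OF pairs2_finite[OF fLV] LEsub] card_pairs2[OF fLV] cLV by simp
  define S where "S e = {b\<in>B. \<forall>u\<in>\<phi>`e. (u,b)\<in>E}" for e
  have cS: "\<forall>e\<in>L_edges s t. card (L_edges s t) \<le> card (S e)"
  proof
    fix e assume e: "e \<in> L_edges s t"
    then have e2: "e \<in> pairs2 (L_verts s t)" using LEsub by auto
    have "\<phi> ` e \<in> pairs2 X"
    proof -
      have "inj_on \<phi> e" using injphi e2 unfolding pairs2_def by (auto intro: inj_on_subset)
      then have "card (\<phi> ` e) = 2" using e2 card_image unfolding pairs2_def by fastforce
      moreover have "\<phi> ` e \<subseteq> X" using e2 phiX unfolding pairs2_def by auto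
      ultimately show ?thesis unfolding pairs2_def by auto
    qed
    then have "codeg B E (\<phi> ` e) \<ge> (s+t-1) choose 2" using assms(6) by auto
    then show "card (L_edges s t) \<le> card (S e)" using cLE unfolding codeg_def S_def by auto
  qed
  obtain g where g: "inj_on g (L_edges s t)" "\<forall>e\<in>L_edges s t. g e \<in> S e"
    using sdr[OF fLE cS] by auto
  define f where "f z = (case z of Inl v \<Rightarrow> Inl (\<phi> v) | Inr e \<Rightarrow> Inr (g e))"
    for z :: "(nat + nat) + (nat + nat) set"
  have "inj_on f (L_verts s t <+> L_edges s t)"
  proof (rule inj_onI)
    fix x y assume "x \<in> L_verts s t <+> L_edges s t" "y \<in> L_verts s t <+> L_edges s t" "f x = f y"
    then show "x = y"
      by (cases x; cases y) (auto simp: f_def dest: inj_onD[OF injphi] inj_onD[OF g(1)])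
  qed
  moreover have "f ` (L_verts s t <+> L_edges s t) \<subseteq> A <+> B"
  proof (rule image_subsetI)
    fix z assume "z \<in> L_verts s t <+> L_edges s t"
    then show "f z \<in> A <+> B"
    proof (cases z)
      case (Inl v) then show ?thesis using \<open>z \<in> _\<close> phiX assms(4) by (auto simp: f_def)
    next
      case (Inr e) then show ?thesis using \<open>z \<in> _\<close> g(2) by (auto simp: f_def S_def)
    qed
  qed
  moreover have "\<forall>v \<in> L_verts s t. \<forall>e \<in> L_edges s t. v \<in> e \<longrightarrow> bip_adj E (f (Inl v)) (f (Inr e))"
    unfolding f_def bip_adj_def using g(2) S_def by auto
  ultimately show ?thesis unfolding contains_Lsub_def by blast
qed

lemma dc:
  assumes "finite B" "finite F"
  shows "(\<Sum>p\<in>F. codeg B E p) = (\<Sum>b\<in>B. card {p\<in>F. \<forall>u\<in>p. (u,b)\<in>E})"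
proof -
  have "(\<Sum>p\<in>F. codeg B E p) = (\<Sum>p\<in>F. \<Sum>b\<in>B. if (\<forall>u\<in>p. (u,b)\<in>E) then 1 else 0)"
    unfolding codeg_def using assms by (simp add: sum.inter_filter[symmetric])
  also have "\<dots> = (\<Sum>b\<in>B. \<Sum>p\<in>F. if (\<forall>u\<in>p. (u,b)\<in>E) then 1 else 0)" by (rule sum.swap)
  also have "\<dots> = (\<Sum>b\<in>B. card {p\<in>F. \<forall>u\<in>p. (u,b)\<in>E})"
    using assms by (simp add: sum.inter_filter[symmetric])
  finally show ?thesis .
qed



lemma two_choose2: "2 * (n choose 2) = n * (n - 1)"
proof -
  have e: "even (n*(n-1))" by (cases n) simp_all
  then show ?thesis by (simp add: choose_two)
qed

lemma aux: "(X::int) - 2*P + K \<ge> 0 \<Longrightarrow> 2*C = X - x \<Longrightarrow> X \<le> 2*Y + P \<Longrightarrow> x \<ge> 0 \<Longrightarrow> K \<ge> 0 \<Longrightarrow> C \<le> 2*Y + 2*K"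
  by linarith

theorem lemma10:
  fixes s t n :: nat and A :: "'a set" and B :: "'b set" and E :: "('a \<times> 'b) set"
  assumes "s \<ge> 1" and "t \<ge> 3"
    and "finite A" and "finite B" and "E \<subseteq> A \<times> B" and "card B = n"
    and "\<not> contains_Lsub s t A B E"
    and "real (Wsum B E A) \<ge> 8 * (real s + real t)^2 * real n"
  shows "real (card (light_edges s t A B E)) \<ge> real (Wsum B E A) / (4 * (real s + real t)^3)"
proof -
  define N where "N b = {a\<in>A. (a,b)\<in>E}" for b
  define LE where "LE = light_edges s t A B E"
  define h where "h = (s+t-1) choose 2"
  define k where "k = s+t-2"
  have LEsub: "LE \<subseteq> pairs2 A" unfolding LE_def light_edges_def by auto
  have fLE: "finite LE" using finite_subset[OF LEsub pairs2_finite[OF assms(3)]] .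
  have NA: "N b \<subseteq> A" for b unfolding N_def by auto
  have indep: "\<forall>I\<subseteq>N b. (\<forall>p\<in>pairs2 I. \<not> p \<in> LE) \<longrightarrow> card I \<le> k" if b: "b \<in> B" for b
  proof (intro allI impI)
    fix I assume I: "I \<subseteq> N b" "\<forall>p\<in>pairs2 I. \<not> p \<in> LE"
    show "card I \<le> k"
    proof (rule ccontr)
      assume "\<not> card I \<le> k"
      then have "s + t - 1 \<le> card I" unfolding k_def using assms(1,2) by auto
      then obtain X where X: "X \<subseteq> I" "card X = s + t - 1" by (meson obtain_subset_with_card_n)
      have "\<forall>p\<in>pairs2 X. codeg B E p \<ge> (s+t-1) choose 2"
      proof
        fix p assume p: "p \<in> pairs2 X"
        then have pI: "p \<in> pairs2 I" using X unfolding pairs2_def by auto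
        then have pA: "p \<in> pairs2 A" using I NA[of b] unfolding pairs2_def by auto
        have "b \<in> {b\<in>B. \<forall>u\<in>p. (u,b)\<in>E}" using b pI I unfolding pairs2_def N_def by auto
        then have "card {b\<in>B. \<forall>u\<in>p. (u,b)\<in>E} > 0" using assms(4) by (subst card_gt_0_iff) auto
        then have "codeg B E p \<ge> 1" unfolding codeg_def by simp
        then show "codeg B E p \<ge> (s+t-1) choose 2" using pA I(2) pI
          unfolding LE_def light_edges_def by auto
      qed
      then have "contains_Lsub s t A B E"
        using clique_L[OF assms(4) assms(1) _ _ X(2)] assms(2) X(1) I(1) NA[of b] by auto
      then show False using assms(7) by simp
    qed
  qed
  define Lb where "Lb b = card {p\<in>pairs2 (N b). p \<in> LE}" for b
  define d where "d b = card (N b)" for b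
  have perb: "d b choose 2 \<le> 2*k*Lb b + 2*k^2" if "b \<in> B" for b
  proof -
    have fN: "finite (N b)" using finite_subset[OF NA assms(3)] .
    have T: "d b ^ 2 \<le> 2*k*Lb b + k*d b"
      using turan_aux[OF fN indep[OF that]] unfolding d_def Lb_def .
    have c2: "2 * (d b choose 2) = d b * (d b - 1)"
      by (rule two_choose2)
    define x where "x = d b" 
    define y where "y = Lb b"
    have T': "int x ^ 2 \<le> 2*int k*int y + int k*int x" using T unfolding x_def y_def
      by (metis (mono_tags, lifting) of_nat_add of_nat_le_iff of_nat_mult of_nat_numeral of_nat_power)
    have c2': "2 * int (d b choose 2) = int x * (int x - 1)"
    proof (cases "d b")
      case 0 then show ?thesis by (simp add: x_def)
    next
      case (Suc m)
      have "int (2*(d b choose 2)) = int (d b * (d b - 1))" using c2 by simp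
      then show ?thesis using Suc unfolding x_def by (simp add: algebra_simps)
    qed
    have "int (d b choose 2) \<le> 2*int k*int y + 2*int k^2"
    proof -
      have "(int x - int k)^2 \<ge> 0" by simp
      then have q: "int x^2 - 2*(int k*int x) + int k^2 \<ge> 0" by (simp add: power2_eq_square algebra_simps)
      have c3: "2*int (d b choose 2) = int x^2 - int x" using c2' by (simp add: power2_eq_square algebra_simps)
      have T2: "int x ^ 2 \<le> 2*(int k*int y) + int k*int x" using T' by (simp add: algebra_simps)
      have "int (d b choose 2) \<le> 2*(int k*int y) + 2*(int k^2)"
        by (rule aux[OF q c3 T2]) simp_all
      then show ?thesis by (simp add: algebra_simps)
    qed
    then show ?thesis unfolding y_def by (metis (mono_tags, lifting) of_nat_add of_nat_le_iff of_nat_mult of_nat_numeral of_nat_power)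
  qed
  have W: "Wsum B E A = (\<Sum>b\<in>B. d b choose 2)"
  proof -
    have "Wsum B E A = (\<Sum>b\<in>B. card {p\<in>pairs2 A. \<forall>u\<in>p. (u,b)\<in>E})"
      unfolding Wsum_def by (rule dc[OF assms(4) pairs2_finite[OF assms(3)]])
    also have "\<dots> = (\<Sum>b\<in>B. card (pairs2 (N b)))"
      by (rule sum.cong) (auto simp: pairs2_def N_def intro!: arg_cong[where f=card])
    also have "\<dots> = (\<Sum>b\<in>B. d b choose 2)"
      using card_pairs2[OF finite_subset[OF NA assms(3)]] unfolding d_def by simp
    finally show ?thesis .
  qed
  have SL: "(\<Sum>p\<in>LE. codeg B E p) = (\<Sum>b\<in>B. Lb b)"
  proof -
    have "(\<Sum>p\<in>LE. codeg B E p) = (\<Sum>b\<in>B. card {p\<in>LE. \<forall>u\<in>p. (u,b)\<in>E})"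
      by (rule dc[OF assms(4) fLE])
    also have "\<dots> = (\<Sum>b\<in>B. Lb b)"
      unfolding Lb_def
      by (rule sum.cong) (use LEsub in \<open>auto simp: pairs2_def N_def intro!: arg_cong[where f=card]\<close>)
    finally show ?thesis .
  qed
  have SLh: "(\<Sum>p\<in>LE. codeg B E p) \<le> card LE * h"
    using sum_bounded_above[of LE "codeg B E" h] unfolding LE_def light_edges_def h_def
    by (simp add: less_imp_le)
  have "Wsum B E A \<le> (\<Sum>b\<in>B. 2*k*Lb b + 2*k^2)"
    unfolding W by (rule sum_mono) (rule perb)
  also have "\<dots> = 2*k*(\<Sum>b\<in>B. Lb b) + 2*k^2*n"
    using assms(6) by (simp add: sum.distrib sum_distrib_left)
  also have "\<dots> \<le> 2*k*(card LE * h) + 2*k^2*n"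
    using SL SLh by simp
  finally have main: "Wsum B E A \<le> 2*k*h*card LE + 2*k^2*n" by (simp add: algebra_simps)
  define m where "m = real s + real t"
  have km: "real k = m - 2" unfolding k_def m_def using assms(1,2) by simp
  have h2: "2 * real h = (m-1)*(m-2)"
  proof -
    have "2*h = (s+t-1)*(s+t-1-1)" unfolding h_def by (simp add: two_choose2)
    then have "real (2*h) = real ((s+t-1)*(s+t-2))" by (simp add: numeral_2_eq_2)
    then show ?thesis unfolding m_def using assms(1,2) by (simp add: of_nat_diff)
  qed
  have m4: "m \<ge> 4" unfolding m_def using assms(1,2) by simp
  define c where "c = real (card LE)"
  define w where "w = real (Wsum B E A)"
  have mainr: "w \<le> 2*real k*real h*c + 2*(real k)^2*real n"
    using main unfolding w_def c_def by (metis (mono_tags, lifting) of_nat_add of_nat_le_iff of_nat_mult of_nat_numeral of_nat_power)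
  have wn: "w \<ge> 8*m^2*real n" using assms(8) unfolding w_def m_def .
  have c0: "c \<ge> 0" unfolding c_def by simp
  have n0: "real n \<ge> 0" by simp
  have A1: "2*real k*real h*c \<le> m^3 * c"
  proof -
    have "2*real k*real h = real k*(2*real h)" by simp
    also have "\<dots> = (m-2)*((m-1)*(m-2))" by (simp only: km h2)
    also have "\<dots> = m^3 - 5*m^2 + 8*m - 4" by (simp add: power2_eq_square power3_eq_cube algebra_simps)
    also have "\<dots> \<le> m^3"
    proof -
      have "m*m \<ge> 4*m" using m4 by (intro mult_right_mono) auto
      then show ?thesis using m4 unfolding power2_eq_square by linarith
    qed
    finally show ?thesis using c0 by (simp add: mult_right_mono)
  qed
  have A2: "2*(real k)^2*real n \<le> 2*m^2*real n"
    using km m4 n0 by (intro mult_right_mono mult_left_mono power_mono) auto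
  have "w \<le> m^3*c + w/4" using mainr A1 A2 wn by linarith
  moreover have w0: "w \<ge> 0" unfolding w_def by simp
  ultimately have "w \<le> (4*m^3)*c" by linarith
  moreover have "4*m^3 > 0" using m4 by simp
  ultimately have "w / (4*m^3) \<le> c" by (simp add: divide_le_eq mult.commute)
  then show ?thesis unfolding w_def c_def m_def LE_def .
qed


end
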